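(* Let $n\ge2$, $y\in\{1,\dots,n-1\}$, $L_b=n-y+1$, and $0\le a<1$. Let $A\in\mathbb{R}^{n\times n}$ be the stem-bud network with all edge weights equal to $a$, i.e., $a_{q+1,q}=a$ for $q=1,\dots,n-1$, $a_{yn}=a$, and all other entries zero, and consider the single input $B=e_1$ and time horizon $T$ (a positive integer). Then: (i) if $w>0$ is added to the weight of a single edge of the bud (one of the edges $q\to q+1$ with $y\le q\le n-1$, or $n\to y$), the modified network has spectral radius less than $1$ provided $0<w<\frac{1-a^{L_b}}{a^{L_b-1}}$ (with no upper restriction if $a=0$); (ii) $\operatorname{tr}(\mathcal{W}_A)\le\sum_{k=0}^{y-2}a^{2k}+\sum_{k=y-1}^{n-1}\frac{a^{2k}}{(1-a^{L_b})^2}$, where $\mathcal{W}_A=\sum_{t=0}^{T-1}A^te_1e_1^{\top}(A^t)^{\top}$.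
   Context: $e_k$ is the $k$-th canonical unit vector; $a_{pq}$ is the weight of edge $q\to p$; the bud of the stem-bud network is the cycle $y\to y+1\to\cdots\to n\to y$, of length $L_b$. *)

theory Defs
  imports "Jordan_Normal_Form.Spectral_Radius"
begin

text \<open>Indices are 0-based: paper node p corresponds to index p-1.
  Entry (i,j) of a matrix is the weight of the edge from node j+1 to node i+1.\<close>

definition stem_bud :: "nat \<Rightarrow> nat \<Rightarrow> real \<Rightarrow> real mat" where
  "stem_bud n y a = mat n n (\<lambda>(i,j).
      if i = j + 1 \<or> (i = y - 1 \<and> j = n - 1) then a else 0)"

text \<open>Bud edges (0-based entries): q -> q+1 for y <= q <= n-1, i.e. entry (q, q-1);
  and n -> y, i.e. entry (y-1, n-1).\<close>
definition bud_edge :: "nat \<Rightarrow> nat \<Rightarrow> nat \<times> nat \<Rightarrow> bool" where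
  "bud_edge n y e = ((\<exists>q. y \<le> q \<and> q \<le> n - 1 \<and> e = (q, q - 1)) \<or> e = (y - 1, n - 1))"

definition add_edge_weight :: "real mat \<Rightarrow> nat \<times> nat \<Rightarrow> real \<Rightarrow> real mat" where
  "add_edge_weight A e w = mat (dim_row A) (dim_col A) (\<lambda>ij. if ij = e then A $$ ij + w else A $$ ij)"

definition mat_trace :: "'a::comm_monoid_add mat \<Rightarrow> 'a" where
  "mat_trace A = (\<Sum>i<dim_row A. A $$ (i,i))"

definition ctrb_gramian :: "real mat \<Rightarrow> real mat \<Rightarrow> nat \<Rightarrow> real mat" where
  "ctrb_gramian A B T = mat (dim_row A) (dim_row A) (\<lambda>ij.
      \<Sum>t<T. ((A ^\<^sub>m t) * B * transpose_mat B * transpose_mat (A ^\<^sub>m t)) $$ ij)"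

end

theory Submission
  imports Defs
begin


definition Ev :: "nat \<Rightarrow> nat \<Rightarrow> real mat" where
  "Ev n p = mat_of_cols n [unit_vec n p]"

lemma Ev_carrier: "Ev n p \<in> carrier_mat n 1" unfolding Ev_def using mat_of_cols_carrier(1)[of n "[unit_vec n p]"] by simp

lemma stem_carrier: "stem_bud n y a \<in> carrier_mat n n" unfolding stem_bud_def by simp

lemma sum_delta_mult: "(q::nat) < n \<Longrightarrow> (\<Sum>i = 0..<n. f i * (if i = q then 1 else 0)) = (f q::'a::semiring_1)"
proof -
  assume q: "q < n"
  have "(\<Sum>i = 0..<n. f i * (if i = q then 1 else 0)) = (\<Sum>i = 0..<n. if i = q then f q else 0)"
    by (rule sum.cong) auto
  also have "\<dots> = f q" using q sum.delta[of "{0..<n}" q "\<lambda>_. f q"] by simp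
  finally show ?thesis .
qed

lemma A_Ev:
  assumes "p < n" "1 \<le> y" "y < n"
  shows "stem_bud n y a * Ev n p = a \<cdot>\<^sub>m Ev n (if p = n - 1 then y - 1 else p + 1)"
  apply (rule eq_matI)
  using assms
  by (auto simp: Ev_def stem_bud_def mat_of_cols_def scalar_prod_def unit_vec_def sum_delta_mult)

lemma A_pow_Ev:
  assumes "1 \<le> y" "y < n"
  shows "p < n \<Longrightarrow> \<exists>q<n. stem_bud n y a ^\<^sub>m t * Ev n p = a ^ t \<cdot>\<^sub>m Ev n q"
proof (induction t arbitrary: p)
  case 0
  have "dim_row (stem_bud n y a) = n" using stem_carrier[of n y a] by auto
  then show ?case using Ev_carrier[of n p] 0 by (intro exI[of _ p]) (auto intro!: eq_matI)
next
  case (Suc t)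
  define p' where "p' = (if p = n - 1 then y - 1 else p + 1)"
  have p': "p' < n" using Suc.prems assms unfolding p'_def by auto
  from Suc.IH[OF p'] obtain q where q: "q < n" "stem_bud n y a ^\<^sub>m t * Ev n p' = a ^ t \<cdot>\<^sub>m Ev n q" by auto
  have C: "stem_bud n y a ^\<^sub>m t \<in> carrier_mat n n" using stem_carrier by (rule pow_carrier_mat)
  have "stem_bud n y a ^\<^sub>m Suc t * Ev n p = (stem_bud n y a ^\<^sub>m t * stem_bud n y a) * Ev n p" by simp
  also have "\<dots> = stem_bud n y a ^\<^sub>m t * (stem_bud n y a * Ev n p)"
    using C stem_carrier Ev_carrier by (rule assoc_mult_mat)
  also have "\<dots> = stem_bud n y a ^\<^sub>m t * (a \<cdot>\<^sub>m Ev n p')"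
    using A_Ev[OF Suc.prems assms] unfolding p'_def by simp
  also have "\<dots> = a \<cdot>\<^sub>m (a ^ t \<cdot>\<^sub>m Ev n q)"
    using mult_smult_distrib[OF C Ev_carrier] q by simp
  also have "\<dots> = a ^ Suc t \<cdot>\<^sub>m Ev n q"
    by (rule eq_matI) auto
  finally show ?case using q by auto
qed

lemma gram_diag:
  assumes "1 \<le> y" "y < n"
  shows "\<exists>q<n. \<forall>i<n. ((stem_bud n y a ^\<^sub>m t) * Ev n 0 * transpose_mat (Ev n 0) * transpose_mat (stem_bud n y a ^\<^sub>m t)) $$ (i,i)
     = (if i = q then (a ^ t)^2 else 0)"
proof -
  have n: "0 < n" using assms by auto
  obtain q where q: "q < n" "stem_bud n y a ^\<^sub>m t * Ev n 0 = a ^ t \<cdot>\<^sub>m Ev n q"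
    using A_pow_Ev[OF assms(1,2) n] by auto
  have C: "stem_bud n y a ^\<^sub>m t \<in> carrier_mat n n" using stem_carrier by (rule pow_carrier_mat)
  have "(stem_bud n y a ^\<^sub>m t) * Ev n 0 * transpose_mat (Ev n 0) * transpose_mat (stem_bud n y a ^\<^sub>m t)
     = ((stem_bud n y a ^\<^sub>m t) * Ev n 0) * (transpose_mat (Ev n 0) * transpose_mat (stem_bud n y a ^\<^sub>m t))"
    by (rule assoc_mult_mat[of _ n 1 _ n]) (use C Ev_carrier in auto)
  also have "\<dots> = ((stem_bud n y a ^\<^sub>m t) * Ev n 0) * transpose_mat ((stem_bud n y a ^\<^sub>m t) * Ev n 0)"
    using transpose_mult[OF C Ev_carrier] by simp
  also have "\<dots> = (a ^ t \<cdot>\<^sub>m Ev n q) * transpose_mat (a ^ t \<cdot>\<^sub>m Ev n q)" using q by simp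
  finally have E: "(stem_bud n y a ^\<^sub>m t) * Ev n 0 * transpose_mat (Ev n 0) * transpose_mat (stem_bud n y a ^\<^sub>m t)
     = (a ^ t \<cdot>\<^sub>m Ev n q) * transpose_mat (a ^ t \<cdot>\<^sub>m Ev n q)" .
  show ?thesis
    apply (rule exI[of _ q])
    unfolding E
    using q(1)
    by (simp add:  Ev_def mat_of_cols_def scalar_prod_def unit_vec_def power2_eq_square)
qed

lemma trace_sum:
  assumes "1 \<le> y" "y < n"
  shows "mat_trace (ctrb_gramian (stem_bud n y a) (mat_of_cols n [unit_vec n 0]) T) = (\<Sum>t<T. (a ^ t)^2)"
proof -
  have dr: "dim_row (stem_bud n y a) = n" using stem_carrier[of n y a] by auto
  have "mat_trace (ctrb_gramian (stem_bud n y a) (mat_of_cols n [unit_vec n 0]) T)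
     = (\<Sum>i<n. \<Sum>t<T. ((stem_bud n y a ^\<^sub>m t) * Ev n 0 * transpose_mat (Ev n 0) * transpose_mat (stem_bud n y a ^\<^sub>m t)) $$ (i,i))"
    unfolding mat_trace_def ctrb_gramian_def dr Ev_def by simp
  also have "\<dots> = (\<Sum>t<T. \<Sum>i<n. ((stem_bud n y a ^\<^sub>m t) * Ev n 0 * transpose_mat (Ev n 0) * transpose_mat (stem_bud n y a ^\<^sub>m t)) $$ (i,i))"
    by (rule sum.swap)
  also have "\<dots> = (\<Sum>t<T. (a ^ t)^2)"
  proof (rule sum.cong[OF refl])
    fix t
    obtain q where q: "q < n" "\<forall>i<n. ((stem_bud n y a ^\<^sub>m t) * Ev n 0 * transpose_mat (Ev n 0) * transpose_mat (stem_bud n y a ^\<^sub>m t)) $$ (i,i)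
     = (if i = q then (a ^ t)^2 else 0)" using gram_diag[OF assms] by blast
    have "(\<Sum>i<n. ((stem_bud n y a ^\<^sub>m t) * Ev n 0 * transpose_mat (Ev n 0) * transpose_mat (stem_bud n y a ^\<^sub>m t)) $$ (i,i))
       = (\<Sum>i<n. if i = q then (a ^ t)^2 else 0)" using q(2) by (intro sum.cong) auto
    also have "\<dots> = (a^t)^2" using q(1) by simp
    finally show "(\<Sum>i<n. ((stem_bud n y a ^\<^sub>m t) * Ev n 0 * transpose_mat (Ev n 0) * transpose_mat (stem_bud n y a ^\<^sub>m t)) $$ (i,i)) = (a^t)^2" .
  qed
  finally show ?thesis .
qed

lemma numeric:
  fixes a :: real
  assumes "0 \<le> a" "a < 1" "1 \<le> y" "y < n"
  shows "(\<Sum>t<T. (a ^ t)^2) \<le> (\<Sum>k=0..<y-1. a ^ (2*k)) + (\<Sum>k=y-1..n-1. a ^ (2*k) / (1 - a ^ (n - y + 1))^2)"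
proof -
  define X where "X = a^2"
  define L where "L = n - y + 1"
  have X0: "0 \<le> X" "X < 1" using assms unfolding X_def by (auto simp: power_less_one_iff abs_square_less_1)
  have L1: "1 \<le> L" unfolding L_def by simp
  have aL: "a ^ L < 1" "0 \<le> a ^ L" using assms L1 by (auto simp: power_less_one_iff)
  have XL: "X ^ L = (a ^ L)^2" unfolding X_def by (simp add: power_mult[symmetric] mult.commute)
  have e1: "(\<Sum>t<T. (a ^ t)^2) = (1 - X^T) / (1 - X)"
  proof -
    have "(\<Sum>t<T. (a ^ t)^2) = (\<Sum>t<T. X^t)"
      by (intro sum.cong refl) (metis X_def power_mult mult.commute)
    also have "\<dots> = (1 - X^T) / (1 - X)" using X0 by (simp add: sum_gp_strict)
    finally show ?thesis .
  qed
  have e2: "(\<Sum>k=0..<y-1. a ^ (2*k)) = (1 - X^(y-1)) / (1 - X)"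
    using X0 by (simp add: X_def power_mult atLeast0LessThan sum_gp_strict)
  have s2: "(\<Sum>k=y-1..n-1. a ^ (2*k)) = (X^(y-1) - X^n) / (1 - X)"
    using X0 assms by (simp add: X_def power_mult sum_gp)
  have n_eq: "n = (y - 1) + L" unfolding L_def using assms by simp
  have s2': "(\<Sum>k=y-1..n-1. a ^ (2*k)) = X^(y-1) * (1 - X^L) / (1 - X)"
  proof -
    have "X^n = X^(y-1)*X^L" using n_eq power_add by metis
    then show ?thesis unfolding s2 by (simp add: algebra_simps)
  qed
  have XL1: "X^L < 1" using X0 L1 by (simp add: power_less_one_iff)
  have s2pos: "0 \<le> (\<Sum>k=y-1..n-1. a ^ (2*k))" by (intro sum_nonneg) (use assms in auto)
  have den: "0 < (1 - a^L)^2" "(1 - a^L)^2 \<le> 1 - X^L"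
  proof -
    have "a^L * a^L \<le> a^L" using aL mult_left_le_one_le[of "a^L" "a^L"] by auto
    then show "(1 - a^L)^2 \<le> 1 - X^L"
      using aL unfolding XL by (auto simp: power2_eq_square algebra_simps)
    show "0 < (1 - a^L)^2" using aL by simp
  qed
  have "(\<Sum>k=y-1..n-1. a ^ (2*k) / (1 - a ^ L)^2) = (\<Sum>k=y-1..n-1. a ^ (2*k)) / (1 - a ^ L)^2"
    by (simp add: sum_divide_distrib)
  also have "\<dots> \<ge> (\<Sum>k=y-1..n-1. a ^ (2*k)) / (1 - X^L)"
    by (rule divide_left_mono[OF den(2) s2pos]) (use den XL1 in \<open>auto intro!: mult_pos_pos simp del: zero_less_power2\<close>)
  finally have b2': "(\<Sum>k=y-1..n-1. a ^ (2*k) / (1 - a ^ L)^2) \<ge> (\<Sum>k=y-1..n-1. a ^ (2*k)) / (1 - X^L)" .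
  have b2: "(\<Sum>k=y-1..n-1. a ^ (2*k) / (1 - a ^ L)^2) \<ge> X^(y-1) / (1 - X)"
  proof -
    have "X^(y-1) * (1 - X^L) / (1 - X) / (1 - X^L) = X^(y-1) / (1 - X)"
    proof -
      have "1 - X^L \<noteq> 0" using XL1 by simp
      then show ?thesis by (simp add: divide_divide_eq_left)
    qed
    then show ?thesis using b2' unfolding s2' by simp
  qed
  have "(\<Sum>t<T. (a ^ t)^2) \<le> 1 / (1 - X)" unfolding e1 using X0
    by (intro divide_right_mono) auto
  also have "\<dots> = (1 - X^(y-1)) / (1 - X) + X^(y-1) / (1 - X)" using X0 by (simp add: field_simps)
  also have "\<dots> \<le> (\<Sum>k=0..<y-1. a ^ (2*k)) + (\<Sum>k=y-1..n-1. a ^ (2*k) / (1 - a ^ L)^2)"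
    unfolding e2 using b2 by simp
  finally show ?thesis unfolding L_def .
qed



lemma cyc_eig:
  fixes M :: "complex mat"
  assumes M: "M \<in> carrier_mat n n" and y: "1 \<le> y" "y < n"
    and zero: "\<And>i j. i < n \<Longrightarrow> j < n \<Longrightarrow> \<not> (i = j + 1 \<or> (i = y - 1 \<and> j = n - 1)) \<Longrightarrow> M $$ (i,j) = 0"
    and ev: "eigenvector M v l" and l: "l \<noteq> 0"
  shows "l ^ (n - y + 1) = M $$ (y - 1, n - 1) * (\<Prod>i\<in>{y..<n}. M $$ (i, i - 1))"
proof -
  have v: "v \<in> carrier_vec n" "v \<noteq> 0\<^sub>v n" "M *\<^sub>v v = l \<cdot>\<^sub>v v"
    using ev M unfolding eigenvector_def by auto
  have eq: "l * v $ i = (\<Sum>j<n. M $$ (i,j) * v $ j)" if "i < n" for i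
  proof -
    have dv: "dim_vec v = n" using v(1) by auto
    have "l * v $ i = (M *\<^sub>v v) $ i" using v(3) that dv by simp
    also have "\<dots> = (\<Sum>j<n. M $$ (i,j) * v $ j)"
      using M v(1) that by (auto simp: scalar_prod_def atLeast0LessThan)
    finally show ?thesis .
  qed
  have eq2: "l * v $ i = (if 1 \<le> i then M $$ (i, i - 1) * v $ (i - 1) else 0)
      + (if i = y - 1 then M $$ (y - 1, n - 1) * v $ (n - 1) else 0)" if i: "i < n" for i
  proof -
    have "(\<Sum>j<n. M $$ (i,j) * v $ j) = (\<Sum>j<n. (if j = i - 1 then (if 1 \<le> i then M $$ (i, i - 1) * v $ (i - 1) else 0) else 0)
       + (if j = n - 1 then (if i = y - 1 then M $$ (y - 1, n - 1) * v $ (n - 1) else 0) else 0))"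
    proof (rule sum.cong[OF refl])
      fix j assume j: "j \<in> {..<n}"
      show "M $$ (i,j) * v $ j = (if j = i - 1 then (if 1 \<le> i then M $$ (i, i - 1) * v $ (i - 1) else 0) else 0)
       + (if j = n - 1 then (if i = y - 1 then M $$ (y - 1, n - 1) * v $ (n - 1) else 0) else 0)"
        using zero[of i j] i j y by (cases "i = 0") auto
    qed
    also have "\<dots> = (if 1 \<le> i then M $$ (i, i - 1) * v $ (i - 1) else 0)
      + (if i = y - 1 then M $$ (y - 1, n - 1) * v $ (n - 1) else 0)"
      using i y by (auto simp: sum.distrib)
    finally show ?thesis using eq[OF i] by simp
  qed
  have zeros: "i < y - 1 \<Longrightarrow> v $ i = 0" for i
  proof (induction i)
    case 0
    then show ?case using eq2[of 0] y l by auto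
  next
    case (Suc i)
    then show ?case using eq2[of "Suc i"] y l by auto
  qed
  have chain: "y - 1 + k < n \<Longrightarrow> l ^ k * v $ (y - 1 + k) = (\<Prod>i\<in>{y..<y+k}. M $$ (i, i - 1)) * v $ (y - 1)" for k
  proof (induction k)
    case 0
    then show ?case by simp
  next
    case (Suc k)
    have "l * v $ (y + k) = M $$ (y + k, y + k - 1) * v $ (y - 1 + k)"
      using eq2[of "y + k"] Suc.prems y by (auto simp: add.commute)
    moreover have "y - 1 + Suc k = y + k" using y by simp
    moreover have "y + k - 1 = y - 1 + k" using y by simp
    ultimately have "l ^ Suc k * v $ (y - 1 + Suc k) = M $$ (y + k, y - 1 + k) * (l ^ k * v $ (y - 1 + k))"
      by (simp add: algebra_simps)
    also have "\<dots> = M $$ (y + k, y - 1 + k) * ((\<Prod>i\<in>{y..<y+k}. M $$ (i, i - 1)) * v $ (y - 1))"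
      using Suc by simp
    also have "\<dots> = (\<Prod>i\<in>{y..<y+Suc k}. M $$ (i, i - 1)) * v $ (y - 1)"
      using y by (simp add: prod.atLeastLessThan_Suc algebra_simps)
    finally show ?case .
  qed
  have base: "l * v $ (y - 1) = M $$ (y - 1, n - 1) * v $ (n - 1)"
  proof (cases "y = 1")
    case True then show ?thesis using eq2[of "y - 1"] y by auto
  next
    case False
    then have "v $ (y - 1 - 1) = 0" using zeros[of "y - 1 - 1"] y by auto
    then show ?thesis using eq2[of "y - 1"] y False by auto
  qed
  have vy: "v $ (y - 1) \<noteq> 0"
  proof
    assume v0: "v $ (y - 1) = 0"
    have "v = 0\<^sub>v n"
    proof (rule eq_vecI)
      fix i assume i: "i < dim_vec (0\<^sub>v n)"
      show "v $ i = 0\<^sub>v n $ i"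
      proof (cases "i < y - 1")
        case True then show ?thesis using zeros i by simp
      next
        case False
        then obtain k where k: "i = y - 1 + k" by (metis le_add_diff_inverse not_less)
        have "l ^ k * v $ i = 0" using chain[of k] k i v0 by simp
        then show ?thesis using l i by simp
      qed
    qed (use v in auto)
    then show False using v by simp
  qed
  have nn: "y - 1 + (n - y) = n - 1" "y + (n - y) = n" using y by auto
  have "l ^ (n - y + 1) * v $ (y - 1) = l ^ (n - y) * (l * v $ (y - 1))" by (simp add: algebra_simps)
  also have "\<dots> = M $$ (y - 1, n - 1) * (l ^ (n - y) * v $ (n - 1))" unfolding base by (simp add: algebra_simps)
  also have "\<dots> = M $$ (y - 1, n - 1) * (\<Prod>i\<in>{y..<n}. M $$ (i, i - 1)) * v $ (y - 1)"
    using chain[of "n - y"] nn y by simp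
  finally show ?thesis using vy by simp
qed

lemma part1:
  fixes n y :: nat and a w :: real
  assumes n: "n \<ge> 2" and y: "1 \<le> y" "y \<le> n - 1" and a: "0 \<le> a" "a < 1"
    and e: "bud_edge n y e" and w: "0 < w" and wb: "a = 0 \<or> w < (1 - a ^ (n - y + 1)) / a ^ (n - y + 1 - 1)"
  shows "spectral_radius (map_mat complex_of_real (add_edge_weight (stem_bud n y a) e w)) < 1"
proof -
  define A where "A = add_edge_weight (stem_bud n y a) e w"
  define M where "M = map_mat complex_of_real A"
  define L where "L = n - y + 1"
  have yn: "y < n" using y n by auto
  have L1: "1 \<le> L" unfolding L_def by auto
  have Ac: "A \<in> carrier_mat n n" unfolding A_def add_edge_weight_def stem_bud_def by simp
  have Mc: "M \<in> carrier_mat n n" unfolding M_def using Ac by simp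
  define wt where "wt = (\<lambda>ij. if ij = e then a + w else a)"
  have Aent: "A $$ (i,j) = (if i = j + 1 \<or> (i = y - 1 \<and> j = n - 1) then wt (i,j) else 0)"
    if "i < n" "j < n" for i j
  proof -
    have epat: "fst e = snd e + 1 \<or> (fst e = y - 1 \<and> snd e = n - 1)"
      using e y unfolding bud_edge_def by auto
    show ?thesis
    proof (cases "(i,j) = e")
      case True
      then have ij: "e = (i,j)" by simp
      show ?thesis using that epat unfolding ij A_def add_edge_weight_def stem_bud_def wt_def by auto
    next
      case False
      then show ?thesis using that unfolding A_def add_edge_weight_def stem_bud_def wt_def by auto
    qed
  qed
  have Ment: "M $$ (i,j) = complex_of_real (A $$ (i,j))" if "i < n" "j < n" for i j
    using that Ac unfolding M_def by auto
  define r where "r = wt (y - 1, n - 1) * (\<Prod>i\<in>{y..<n}. wt (i, i - 1))"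
  have r_eq: "r = a ^ (L - 1) * (a + w)"
  proof -
    from e consider (q) q where "y \<le> q" "q \<le> n - 1" "e = (q, q - 1)" | (c) "e = (y - 1, n - 1)"
      unfolding bud_edge_def by auto
    then show ?thesis
    proof cases
      case c
      have "(\<Prod>i\<in>{y..<n}. wt (i, i - 1)) = (\<Prod>i\<in>{y..<n}. a)"
        by (rule prod.cong) (use c y in \<open>auto simp: wt_def\<close>)
      then show ?thesis unfolding r_def L_def using c by (simp add: wt_def)
    next
      case q
      have ne: "(y - 1, n - 1) \<noteq> e" using q y by auto
      have qin: "q \<in> {y..<n}" using q yn by auto
      have "(\<Prod>i\<in>{y..<n}. wt (i, i - 1)) = wt (q, q - 1) * (\<Prod>i\<in>{y..<n} - {q}. wt (i, i - 1))"
        using qin by (simp add: prod.remove)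
      also have "(\<Prod>i\<in>{y..<n} - {q}. wt (i, i - 1)) = (\<Prod>i\<in>{y..<n} - {q}. a)"
        by (rule prod.cong) (use q y in \<open>auto simp: wt_def\<close>)
      also have "\<dots> = a ^ (n - y - 1)" using qin by (simp add: card_Diff_singleton)
      finally have "(\<Prod>i\<in>{y..<n}. wt (i, i - 1)) = (a + w) * a ^ (n - y - 1)" using q by (simp add: wt_def)
      moreover have "a * a ^ (n - y - 1) = a ^ (L - 1)"
      proof -
        have "L - 1 = Suc (n - y - 1)" unfolding L_def using yn by simp
        then show ?thesis by simp
      qed
      ultimately show ?thesis unfolding r_def using ne by (simp add: wt_def algebra_simps)
    qed
  qed
  have r0: "0 \<le> r" unfolding r_eq using a w by simp
  have r1: "r < 1"
  proof (cases "a = 0")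
    case True
    obtain k where k: "n - y + 1 - 1 = Suc k" using yn by (cases "n - y") auto
    show ?thesis unfolding r_eq L_def k using True by simp
  next
    case False
    then have wb': "w < (1 - a ^ L) / a ^ (L - 1)" using wb unfolding L_def by simp
    have ap: "0 < a ^ (L - 1)" using a False by simp
    have "a ^ (L - 1) * w < 1 - a ^ L" using wb' ap by (simp add: field_simps)
    moreover have "a ^ L = a ^ (L - 1) * a"
    proof -
      from L1 obtain k where "L = Suc k" by (cases L) auto
      then show ?thesis by (simp add: mult.commute)
    qed
    ultimately show ?thesis unfolding r_eq by (simp add: algebra_simps)
  qed
  have n0: "0 < n" using n by simp
  from spectral_radius_mem_max(1)[OF Mc n0]
  obtain l where l: "l \<in> spectrum M" "spectral_radius M = norm l" by auto
  have "spectral_radius M < 1"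
  proof (cases "l = 0")
    case True then show ?thesis using l(2) by simp
  next
    case False
    from l(1) obtain v where ev: "eigenvector M v l" unfolding spectrum_def eigenvalue_def by auto
    have zero: "M $$ (i,j) = 0" if "i < n" "j < n" "\<not> (i = j + 1 \<or> (i = y - 1 \<and> j = n - 1))" for i j
    proof -
      have "A $$ (i,j) = 0" by (simp only: Aent[OF that(1,2)] if_not_P[OF that(3)])
      then show ?thesis using Ment[OF that(1,2)] by simp
    qed
    have "l ^ L = M $$ (y - 1, n - 1) * (\<Prod>i\<in>{y..<n}. M $$ (i, i - 1))"
      unfolding L_def by (rule cyc_eig[OF Mc y(1) yn zero ev False])
    also have "\<dots> = complex_of_real r"
    proof -
      have "(\<Prod>i\<in>{y..<n}. M $$ (i, i - 1)) = (\<Prod>i\<in>{y..<n}. complex_of_real (wt (i, i - 1)))"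
        by (rule prod.cong) (use y Ment Aent in auto)
      moreover have "M $$ (y - 1, n - 1) = complex_of_real (wt (y - 1, n - 1))"
        using yn Ment Aent by simp
      ultimately show ?thesis unfolding r_def by simp
    qed
    finally have "norm l ^ L = r" using r0 by (simp add: norm_power[symmetric])
    then have "norm l ^ L < 1 ^ L" using r1 by simp
    then have "norm l < 1" by (rule power_less_imp_less_base) simp
    then show ?thesis using l(2) by simp
  qed
  then show ?thesis unfolding M_def A_def .
qed


theorem theorem5p6:
  fixes n y T :: nat and a :: real
  assumes "n \<ge> 2" and "1 \<le> y" and "y \<le> n - 1"
    and "0 \<le> a" and "a < 1" and "T \<ge> 1"
  defines "Lb \<equiv> n - y + 1"
  shows "(\<forall>e w. bud_edge n y e \<longrightarrow> 0 < w \<longrightarrow>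
            (a = 0 \<or> w < (1 - a ^ Lb) / a ^ (Lb - 1)) \<longrightarrow>
            spectral_radius (map_mat complex_of_real (add_edge_weight (stem_bud n y a) e w)) < 1)
       \<and> mat_trace (ctrb_gramian (stem_bud n y a) (mat_of_cols n [unit_vec n 0]) T)
           \<le> (\<Sum>k=0..<y-1. a ^ (2*k)) + (\<Sum>k=y-1..n-1. a ^ (2*k) / (1 - a ^ Lb)^2)"
proof
  show "\<forall>e w. bud_edge n y e \<longrightarrow> 0 < w \<longrightarrow>
            (a = 0 \<or> w < (1 - a ^ Lb) / a ^ (Lb - 1)) \<longrightarrow>
            spectral_radius (map_mat complex_of_real (add_edge_weight (stem_bud n y a) e w)) < 1"
    using part1[OF assms(1-5)] unfolding Lb_def by blast
  have yn: "y < n" using assms by auto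
  show "mat_trace (ctrb_gramian (stem_bud n y a) (mat_of_cols n [unit_vec n 0]) T)
           \<le> (\<Sum>k=0..<y-1. a ^ (2*k)) + (\<Sum>k=y-1..n-1. a ^ (2*k) / (1 - a ^ Lb)^2)"
    unfolding trace_sum[OF assms(2) yn] Lb_def using numeric[OF assms(4,5,2) yn] .
qed

end
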